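(* Let $\mathcal{L}$ and $\mathcal{L}'$ be lattices and $u,u':\mathbb{N}\to\mathbb{N}$. If $\mathcal{L}$ is $O(u(n))$ and $\mathcal{L}'$ is $O(u'(n))$, then the product lattice $\mathcal{L}\times\mathcal{L}'$ is $O(u(n)u'(n))$.
   Context: A lattice means a partially ordered set $(\mathcal{L},\sqsubseteq)$ with least element $\bot$ in which any two elements have a least upper bound $\sqcup$; $\bigsqcup S$ denotes the least upper bound of a finite set ($\bigsqcup\emptyset=\bot$). The product lattice $\mathcal{L}\times\mathcal{L}'$ has pairs $(\ell,\ell')$ with $\ell\in\mathcal{L},\ell'\in\mathcal{L}'$ ordered componentwise: $(\ell_0,\ell_1)\sqsubseteq(\jmath_0,\jmath_1)$ iff $\ell_0\sqsubseteq\jmath_0$ and $\ell_1\sqsubseteq\jmath_1$. The closure set of a finite $S$ is $C(S)=\{\bigsqcup S' : S'\subseteq S\}$ and $CS_{\mathcal{L}}(n)=\max\{|C(S)| : S\subseteq\mathcal{L}\text{ finite}, |S|\le n\}$. For $f,g:\mathbb{N}\to\mathbb{N}$, $f$ is $O(g)$ iff there exist $N_0\in\mathbb{N}$ and rational $C>0$ with $f(n)\le Cg(n)$ for all $n\ge N_0$. A lattice $\mathcal{L}$ is $O(f(n))$ iff $CS_{\mathcal{L}}(n)$ is $O(f(n))$. *)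

theory Defs
  imports Complex_Main "HOL-Library.Product_Order"
begin

text \<open>A lattice in the sense of the paper: a partial order with least element
  and binary least upper bounds, i.e. the type class semilattice_sup + order_bot.\<close>

definition big_join :: "'a::{semilattice_sup,order_bot} set \<Rightarrow> 'a" where
  "big_join S = Finite_Set.fold sup bot S"

definition closure_set :: "'a::{semilattice_sup,order_bot} set \<Rightarrow> 'a set" where
  "closure_set S = {big_join S' | S'. S' \<subseteq> S}"

definition CS :: "'a::{semilattice_sup,order_bot} itself \<Rightarrow> nat \<Rightarrow> nat" where
  "CS _ n = Max {card (closure_set (S :: 'a set)) | S. finite S \<and> card S \<le> n}"

definition bigO :: "(nat \<Rightarrow> nat) \<Rightarrow> (nat \<Rightarrow> nat) \<Rightarrow> bool" where
  "bigO f g \<longleftrightarrow> (\<exists>N0::nat. \<exists>C::rat. C > 0 \<and> (\<forall>n\<ge>N0. of_nat (f n) \<le> C * of_nat (g n)))"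

end

theory Submission
  imports Defs
begin

lemma bj_empty: "big_join {} = bot"
  by (simp add: big_join_def)

lemma bj_insert:
  fixes S :: "'a::{semilattice_sup,order_bot} set"
  assumes "finite S"
  shows "big_join (insert x S) = sup x (big_join S)"
proof -
  interpret comp_fun_idem "sup :: 'a \<Rightarrow> 'a \<Rightarrow> 'a" by (fact comp_fun_idem_sup)
  show ?thesis using assms by (simp add: big_join_def fold_insert_idem)
qed

lemma bj_fst:
  fixes S :: "('a::{semilattice_sup,order_bot} \<times> 'b::{semilattice_sup,order_bot}) set"
  assumes "finite S"
  shows "big_join (fst ` S) = fst (big_join S) \<and> big_join (snd ` S) = snd (big_join S)"
  using assms
proof (induction S rule: finite_induct)
  case empty
  then show ?case by (simp add: bj_empty)
next
  case (insert x F)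
  then show ?case by (simp add: bj_insert)
qed

lemma cs_finite:
  fixes S :: "'a::{semilattice_sup,order_bot} set"
  assumes "finite S"
  shows "finite (closure_set S) \<and> card (closure_set S) \<le> 2 ^ card S"
proof -
  have e: "closure_set S = big_join ` Pow S" unfolding closure_set_def by auto
  have "card (big_join ` Pow S) \<le> card (Pow S)" using assms by (intro card_image_le) simp
  then show ?thesis using e assms by (simp add: card_Pow)
qed

lemma CS_ge:
  fixes S :: "'a::{semilattice_sup,order_bot} set"
  assumes "finite S" "card S \<le> n"
  shows "card (closure_set S) \<le> CS TYPE('a) n"
proof -
  let ?A = "{card (closure_set (S :: 'a set)) | S. finite S \<and> card S \<le> n}"
  have "?A \<subseteq> {..2^n}"
  proof
    fix k assume "k \<in> ?A"
    then obtain T :: "'a set" where "k = card (closure_set T)" "finite T" "card T \<le> n" by blast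
    moreover have "(2::nat) ^ card T \<le> 2 ^ n" using \<open>card T \<le> n\<close> by (simp add: power_increasing)
    ultimately show "k \<in> {..2^n}" using cs_finite[of T] by (metis atMost_iff le_trans)
  qed
  then have "finite ?A" by (rule finite_subset) simp
  moreover have "card (closure_set S) \<in> ?A" using assms by blast
  ultimately show ?thesis unfolding CS_def by (rule Max_ge)
qed

lemma CS_prod:
  "CS TYPE('a::{semilattice_sup,order_bot} \<times> 'b::{semilattice_sup,order_bot}) n
     \<le> CS TYPE('a) n * CS TYPE('b) n"
proof -
  let ?A = "{card (closure_set (S :: ('a \<times> 'b) set)) | S. finite S \<and> card S \<le> n}"
  have "finite ?A"
  proof (rule finite_subset)
    show "?A \<subseteq> {..2^n}"
    proof
      fix k assume "k \<in> ?A"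
      then obtain T :: "('a\<times>'b) set" where "k = card (closure_set T)" "finite T" "card T \<le> n" by blast
      moreover have "(2::nat) ^ card T \<le> 2 ^ n" using \<open>card T \<le> n\<close> by (simp add: power_increasing)
      ultimately show "k \<in> {..2^n}" using cs_finite[of T] by (metis atMost_iff le_trans)
    qed
  qed simp
  moreover have "card (closure_set ({} :: ('a\<times>'b) set)) \<in> ?A" by force
  then have "?A \<noteq> {}" by blast
  moreover have "\<forall>k\<in>?A. k \<le> CS TYPE('a) n * CS TYPE('b) n"
  proof
    fix k assume "k \<in> ?A"
    then obtain T :: "('a\<times>'b) set" where k: "k = card (closure_set T)" and T: "finite T" "card T \<le> n" by blast
    have sub: "closure_set T \<subseteq> closure_set (fst ` T) \<times> closure_set (snd ` T)"
    proof
      fix p assume "p \<in> closure_set T"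
      then obtain S' where p: "p = big_join S'" "S' \<subseteq> T" unfolding closure_set_def by blast
      then have "finite S'" using T finite_subset by blast
      then have "p = (big_join (fst ` S'), big_join (snd ` S'))" using bj_fst[of S'] p by simp
      then show "p \<in> closure_set (fst ` T) \<times> closure_set (snd ` T)"
        unfolding closure_set_def using p(2) by blast
    qed
    have f1: "finite (closure_set (fst ` T))" "finite (closure_set (snd ` T))"
      using cs_finite T by auto
    have "k \<le> card (closure_set (fst ` T) \<times> closure_set (snd ` T))"
      unfolding k using sub f1 by (intro card_mono) auto
    also have "\<dots> = card (closure_set (fst ` T)) * card (closure_set (snd ` T))"
      by (simp add: card_cartesian_product)
    also have "\<dots> \<le> CS TYPE('a) n * CS TYPE('b) n"
    proof (rule mult_mono)
      show "card (closure_set (fst ` T)) \<le> CS TYPE('a) n"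
        using T card_image_le[of T fst] by (intro CS_ge) auto
      show "card (closure_set (snd ` T)) \<le> CS TYPE('b) n"
        using T card_image_le[of T snd] by (intro CS_ge) auto
    qed auto
    finally show "k \<le> CS TYPE('a) n * CS TYPE('b) n" .
  qed
  ultimately show ?thesis unfolding CS_def by (simp add: Max_le_iff)
qed

theorem mainTheorem3:
  fixes u u' :: "nat \<Rightarrow> nat"
  assumes "bigO (CS TYPE('a::{semilattice_sup,order_bot})) u"
      and "bigO (CS TYPE('b::{semilattice_sup,order_bot})) u'"
  shows "bigO (CS TYPE('a \<times> 'b)) (\<lambda>n. u n * u' n)"
proof -
  obtain N1 and C1 :: rat where 1: "C1 > 0" "\<forall>n\<ge>N1. of_nat (CS TYPE('a) n) \<le> C1 * of_nat (u n)"
    using assms(1) unfolding bigO_def by blast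
  obtain N2 and C2 :: rat where 2: "C2 > 0" "\<forall>n\<ge>N2. of_nat (CS TYPE('b) n) \<le> C2 * of_nat (u' n)"
    using assms(2) unfolding bigO_def by blast
  have "\<forall>n\<ge>max N1 N2. (of_nat (CS TYPE('a \<times> 'b) n) :: rat) \<le> (C1 * C2) * of_nat (u n * u' n)"
  proof (intro allI impI)
    fix n assume "max N1 N2 \<le> n"
    then have a: "(of_nat (CS TYPE('a) n) :: rat) \<le> C1 * of_nat (u n)"
      and b: "(of_nat (CS TYPE('b) n) :: rat) \<le> C2 * of_nat (u' n)" using 1 2 by auto
    have "(of_nat (CS TYPE('a \<times> 'b) n) :: rat) \<le> of_nat (CS TYPE('a) n * CS TYPE('b) n)"
      using CS_prod by (simp only: of_nat_le_iff)
    also have "\<dots> = of_nat (CS TYPE('a) n) * of_nat (CS TYPE('b) n)" by simp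
    also have "\<dots> \<le> (C1 * of_nat (u n)) * (C2 * of_nat (u' n))"
      using a b by (intro mult_mono) auto
    also have "\<dots> = (C1 * C2) * of_nat (u n * u' n)" by (simp add: algebra_simps)
    finally show "(of_nat (CS TYPE('a \<times> 'b) n) :: rat) \<le> (C1 * C2) * of_nat (u n * u' n)" .
  qed
  moreover have "C1 * C2 > 0" using 1 2 by simp
  ultimately show ?thesis unfolding bigO_def by blast
qed

end
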